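(* There exist a compact set $\mathcal{X}\subseteq\mathbb{R}^n$, a set $\mathcal{X}_0\subseteq\mathcal{X}$, a map $f:\mathcal{X}\to\mathcal{X}$ and a set $\mathcal{X}_{INF}\subseteq\mathcal{X}$ such that for every $x_0\in\mathcal{X}_0$ the state sequence $x_{k+1}=f(x_k)$ satisfies $x_k\in\mathcal{X}_{INF}$ for infinitely many $k$, but there is no bounded function $\mathcal{T}:\mathcal{X}\times\mathcal{X}\to\mathbb{R}$ together with a constant $\xi>0$ satisfying: (i) $\mathcal{T}(x,f(x))\geq0$ for all $x\in\mathcal{X}$; (ii) for all $x,y\in\mathcal{X}$: if $\mathcal{T}(x,f(x))\geq 0$ and $\mathcal{T}(f(x),y)\geq0$, then $\mathcal{T}(x,y)\geq0$; (iii) for all $x_0\in\mathcal{X}_0$ and all $y\in\mathcal{X}\setminus\mathcal{X}_{INF}$: if $\mathcal{T}(x_0,y)\geq0$ and $\mathcal{T}(y,f(y))\geq 0$, then $\mathcal{T}(x_0,f(y))\geq\mathcal{T}(x_0,y)+\xi$.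
   Context: A discrete-time dynamical system $(\mathcal{X},\mathcal{X}_0,f)$ (a control system with a single input) has state sequences $\langle x_0,x_1,\ldots\rangle$ with $x_0\in\mathcal{X}_0$ and $x_{k+1}=f(x_k)$. Conditions (i)–(iii) with bounded $\mathcal{T}$ constitute a (control) closure certificate for recurrence of $\mathcal{X}_{INF}$ in the single-input case. *)

theory Defs
  imports "HOL-Analysis.Analysis"
begin

end

theory Submission imports Defs begin
definition vv :: "real ^ 'n" where "vv = (\<chi> i. 1)"
definition aa :: "nat \<Rightarrow> real ^ 'n" where "aa j = scaleR ((1/2::real) ^ j) (vv :: real ^ 'n)"
definition ff :: "real ^ 'n \<Rightarrow> real ^ 'n" where "ff x = (if x = vv then vv else scaleR 2 x)"

lemma vv_nz: "(vv :: real ^ 'n) \<noteq> 0"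
  by (simp add: vv_def vec_eq_iff)

lemma aa_eq_vv: "(aa j :: real ^ 'n) = vv \<longleftrightarrow> j = 0"
proof
  assume "aa j = (vv :: real ^ 'n)"
  then have "scaleR ((1/2::real) ^ j) vv = scaleR 1 (vv :: real ^ 'n)"
    by (simp add: aa_def)
  then have "(1/2::real) ^ j = 1" using vv_nz scaleR_cancel_right by blast
  show "j = 0"
  proof (rule ccontr)
    assume "j \<noteq> 0"
    then have "(1/2::real) ^ j < 1" by (simp add: power_less_one_iff)
    with \<open>(1/2::real) ^ j = 1\<close> show False by simp
  qed
qed (simp add: aa_def)

lemma ff_aa: "ff (aa (Suc j)) = (aa j :: real ^ 'n)"
proof -
  have ne: "aa (Suc j) \<noteq> (vv :: real ^ 'n)" using aa_eq_vv by blast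
  have "ff (aa (Suc j)) = scaleR 2 (aa (Suc j) :: real ^ 'n)" using ne by (simp add: ff_def)
  also have "\<dots> = aa j" by (simp add: aa_def)
  finally show ?thesis .
qed

lemma ff_aa0: "ff (aa 0) = (aa 0 :: real ^ 'n)"
  by (simp add: ff_def aa_def)

lemma ff_aa_minus: "ff (aa j) = (aa (j - 1) :: real ^ 'n)"
  by (cases j) (simp_all only: ff_aa ff_aa0, simp_all)

lemma ffpow: "(ff ^^ k) (aa m) = (aa (m - k) :: real ^ 'n)"
proof (induction k)
  case 0 then show ?case by simp
next
  case (Suc k)
  have "(ff ^^ Suc k) (aa m) = ff (aa (m - k) :: real ^ 'n)" by (simp only: funpow.simps comp_def Suc.IH)
  also have "\<dots> = aa (m - Suc k)" by (simp only: ff_aa_minus diff_Suc_eq_diff_pred diff_commute)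
  finally show ?case .
qed
theorem lemma2:
  shows "\<exists>(X :: (real ^ 'n) set) X0 (f :: real ^ 'n \<Rightarrow> real ^ 'n) XINF.
    compact X \<and> X0 \<subseteq> X \<and> f ` X \<subseteq> X \<and> XINF \<subseteq> X \<and>
    (\<forall>x0\<in>X0. infinite {k :: nat. (f ^^ k) x0 \<in> XINF}) \<and>
    \<not> (\<exists>(T :: real ^ 'n \<Rightarrow> real ^ 'n \<Rightarrow> real) (\<xi> :: real).
          (\<exists>B. \<forall>x\<in>X. \<forall>y\<in>X. \<bar>T x y\<bar> \<le> B) \<and> \<xi> > 0 \<and>
          (\<forall>x\<in>X. T x (f x) \<ge> 0) \<and>
          (\<forall>x\<in>X. \<forall>y\<in>X. T x (f x) \<ge> 0 \<and> T (f x) y \<ge> 0 \<longrightarrow> T x y \<ge> 0) \<and>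
          (\<forall>x0\<in>X0. \<forall>y\<in>X - XINF. T x0 y \<ge> 0 \<and> T y (f y) \<ge> 0
                \<longrightarrow> T x0 (f y) \<ge> T x0 y + \<xi>))"
proof -
  let ?X = "insert 0 (range aa) :: (real ^ 'n) set"
  let ?Z = "range aa :: (real ^ 'n) set"
  let ?I = "{aa 0} :: (real ^ 'n) set"
  have lim: "aa \<longlonglongrightarrow> (0 :: real ^ 'n)"
  proof -
    have "(\<lambda>j. (1/2::real)^j) \<longlonglongrightarrow> 0" by (rule LIMSEQ_power_zero) simp
    from tendsto_scaleR[OF this tendsto_const[of "vv :: real ^ 'n"]]
    show ?thesis by (simp add: aa_def[abs_def])
  qed
  have c: "compact ?X" by (rule compact_sequence_with_limit[OF lim])
  have im: "ff ` ?X \<subseteq> ?X"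
  proof
    fix z assume "z \<in> ff ` ?X"
    then obtain x where x: "x \<in> ?X" "z = ff x" by blast
    show "z \<in> ?X"
    proof (cases "x = 0")
      case True
      then have "z = 0" using x vv_nz by (simp add: ff_def)
      then show ?thesis by simp
    next
      case False
      then obtain j where "x = aa j" using x by blast
      then have "z = aa (j - 1)" using x ff_aa_minus by simp
      then show ?thesis by simp
    qed
  qed
  have inf: "\<forall>x0\<in>?Z. infinite {k :: nat. (ff ^^ k) x0 \<in> ?I}"
  proof
    fix x0 assume "x0 \<in> ?Z"
    then obtain m where m: "x0 = aa m" by auto
    have "{m..} \<subseteq> {k :: nat. (ff ^^ k) x0 \<in> ?I}"
      by (auto simp: m ffpow)
    moreover have "infinite {m::nat..}" by (rule infinite_Ici)
    ultimately show "infinite {k :: nat. (ff ^^ k) x0 \<in> ?I}"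
      using finite_subset by blast
  qed
  have no: "\<not> (\<exists>(T :: real ^ 'n \<Rightarrow> real ^ 'n \<Rightarrow> real) (\<xi> :: real).
          (\<exists>B. \<forall>x\<in>?X. \<forall>y\<in>?X. \<bar>T x y\<bar> \<le> B) \<and> \<xi> > 0 \<and>
          (\<forall>x\<in>?X. T x (ff x) \<ge> 0) \<and>
          (\<forall>x\<in>?X. \<forall>y\<in>?X. T x (ff x) \<ge> 0 \<and> T (ff x) y \<ge> 0 \<longrightarrow> T x y \<ge> 0) \<and>
          (\<forall>x0\<in>?Z. \<forall>y\<in>?X - ?I. T x0 y \<ge> 0 \<and> T y (ff y) \<ge> 0
                \<longrightarrow> T x0 (ff y) \<ge> T x0 y + \<xi>))"
  proof
    assume "\<exists>(T :: real ^ 'n \<Rightarrow> real ^ 'n \<Rightarrow> real) (\<xi> :: real).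
          (\<exists>B. \<forall>x\<in>?X. \<forall>y\<in>?X. \<bar>T x y\<bar> \<le> B) \<and> \<xi> > 0 \<and>
          (\<forall>x\<in>?X. T x (ff x) \<ge> 0) \<and>
          (\<forall>x\<in>?X. \<forall>y\<in>?X. T x (ff x) \<ge> 0 \<and> T (ff x) y \<ge> 0 \<longrightarrow> T x y \<ge> 0) \<and>
          (\<forall>x0\<in>?Z. \<forall>y\<in>?X - ?I. T x0 y \<ge> 0 \<and> T y (ff y) \<ge> 0
                \<longrightarrow> T x0 (ff y) \<ge> T x0 y + \<xi>)"
    then obtain T and \<xi> :: real and B where
      hB: "\<forall>x\<in>?X. \<forall>y\<in>?X. \<bar>T x y\<bar> \<le> B" and xi: "\<xi> > 0" and
      h1: "\<forall>x\<in>?X. T x (ff x) \<ge> 0" and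
      h3: "\<forall>x0\<in>?Z. \<forall>y\<in>?X - ?I. T x0 y \<ge> 0 \<and> T y (ff y) \<ge> 0
                \<longrightarrow> T x0 (ff y) \<ge> T x0 y + \<xi>"
      by (elim exE conjE) (rule that)
    obtain M :: nat where M: "B / \<xi> < real M" using reals_Archimedean2 by blast
    define x0 :: "real ^ 'n" where "x0 = aa (Suc M)"
    have x0Z: "x0 \<in> ?Z" by (simp add: x0_def)
    then have x0X: "x0 \<in> ?X" by blast
    have fx0: "ff x0 = aa M" by (simp add: x0_def ff_aa)
    have step: "j \<le> M \<Longrightarrow> T x0 (aa (M - j)) \<ge> real j * \<xi>" for j
    proof (induction j)
      case 0
      have "T x0 (ff x0) \<ge> 0" using h1 x0X by blast
      then show ?case using fx0 by simp
    next
      case (Suc j)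
      let ?y = "aa (M - j) :: real ^ 'n"
      have ne: "M - j \<noteq> 0" using Suc.prems by simp
      have a0: "aa 0 = (vv :: real ^ 'n)" by (rule iffD2[OF aa_eq_vv], rule refl)
      have "?y \<noteq> vv" using ne aa_eq_vv[of "M - j", where 'n='n] by (simp only: simp_thms)
      then have "?y \<noteq> aa 0" by (simp only: a0 not_False_eq_True)
      then have nI: "?y \<notin> ?I" by (simp only: singleton_iff not_False_eq_True)
      have yX: "?y \<in> ?X" by (rule insertI2, rule rangeI)
      have y1: "?y \<in> ?X - ?I" using yX nI by (rule DiffI)
      have jM: "j \<le> M" using Suc.prems by simp
      have ih: "T x0 ?y \<ge> real j * \<xi>" using Suc.IH jM by blast
      have "0 \<le> real j * \<xi>" using xi by simp
      then have t0: "T x0 ?y \<ge> 0" using ih by linarith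
      have t1: "T ?y (ff ?y) \<ge> 0" using bspec[OF h1 yX] .
      have "T x0 (ff ?y) \<ge> T x0 ?y + \<xi>"
        using mp[OF bspec[OF bspec[OF h3 x0Z] y1] conjI[OF t0 t1]] .
      moreover have "ff ?y = aa (M - Suc j)" by (simp add: ff_aa_minus)
      ultimately have "T x0 (aa (M - Suc j)) \<ge> T x0 ?y + \<xi>" by simp
      moreover have "real (Suc j) * \<xi> = real j * \<xi> + \<xi>" by (simp add: distrib_right)
      ultimately show ?case using ih by linarith
    qed
    have "T x0 (aa 0) \<ge> real M * \<xi>" using step[of M] by simp
    moreover have "T x0 (aa 0) \<le> B"
    proof -
      have "aa 0 \<in> ?X" by blast
      then have "\<bar>T x0 (aa 0)\<bar> \<le> B" using hB x0X by blast
      then show ?thesis by simp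
    qed
    moreover have "B < real M * \<xi>" using M xi by (simp add: field_simps)
    ultimately show False by linarith
  qed
  show ?thesis
    apply (rule exI[of _ ?X], rule exI[of _ ?Z], rule exI[of _ ff], rule exI[of _ ?I])
    apply (intro conjI)
       apply (fact c)
      apply blast
     apply (fact im)
    apply blast
   apply (fact inf)
  apply (fact no)
  done
qed

end
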